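(* For every ring grooming instance with uniform traffic ($d_{jk}=d\ge 1$ for all $j\ne k$), Algorithm A produces a feasible routing whose number of ADMs is at most $12\sqrt2\, m$, where $m$ is the minimum number of ADMs for the instance.
   Context: Ring grooming. An instance consists of integers $n\ge 2$ (ring size) and $c\ge 1$ (capacity), and a finite list $L$ of unordered pairs $\{j,k\}$ with $j\ne k$, $j,k\in\{1,\dots,n\}$ (repetitions allowed); these are the traffic demands. Let $d_{jk}=d_{kj}$ be the number of times $\{j,k\}$ occurs in $L$. Let $C_n$ be the cycle graph on vertices $1,\dots,n$ in cyclic order. A solution uses some finite number of "rings", each a copy of $C_n$ with capacity $c$ on every edge. A routing specifies, for every ring $i$ and every pair $j<k$, nonnegative integers $t^0_{ijk},t^1_{ijk}$ (amounts of $\{j,k\}$-traffic on ring $i$ along each of the two arcs of $C_n$ between $j$ and $k$); it is feasible if $\sum_i(t^0_{ijk}+t^1_{ijk})=d_{jk}$ for all $j<k$ and on every ring every edge carries total traffic at most $c$. Ring $i$ needs an ADM at vertex $j$ iff some traffic with endpoint $j$ is routed on ring $i$; the cost is the total number of ADMs, and $m$ is the minimum cost. Algorithm A (uniform traffic $d$, $f=d/(2c)$). If $f\ge 1$: for each pair $j<k$, use $\lceil f\rceil$ rings on which only $\{j,k\}$-traffic is routed (so each has ADMs only at $j$ and $k$), splitting the $d$ units among them feasibly. If $f<1$: let $M=\lfloor\sqrt{2/f}\rfloor$ if $2\le\lfloor\sqrt{2/f}\rfloor\le n$, $M=2$ if $\lfloor\sqrt{2/f}\rfloor<2$, and $M=n$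 if $\lfloor\sqrt{2/f}\rfloor>n$. Let $\mu=\lfloor M/2\rfloor$ and let $F$ be a family of $\lceil n/\mu\rceil$ subsets of $\{1,\dots,n\}$, each of size $\mu$, whose union is $\{1,\dots,n\}$. For each unordered pair of distinct members of $F$, form a block equal to their union, enlarged if necessary by arbitrary further vertices to have exactly $M$ elements (if $F$ has a single member, take the single block $\{1,\dots,n\}$); discard duplicate blocks. Every pair $\{j,k\}$ then lies in some block. Process the blocks in turn: for each block, create a ring and route on it all demands between vertices of the block that have not been routed on a previous ring, using, for each such pair, $\lfloor d/2\rfloor$ units on the longer arc and $\lceil d/2\rceil$ units on the shorter arc (ties broken arbitrarily). Finally discard ADMs at which no traffic terminates. *)

theory Defs
  imports Complex_Main
begin

(* Vertices of C_n are 1..n.  Edge e (1 <= e <= n) joins e and e+1, edge n joins n and 1.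
   For a pair j < k, arc "False" (t^0) is the arc j, j+1, ..., k, i.e. edges {j..<k};
   arc "True" (t^1) is the complementary arc, i.e. edges {1..n} - {j..<k}.
   A routing with R rings is t :: ring => j => k => arc => amount, meaningful for
   rings i < R and pairs 1 <= j < k <= n.  Demands are given by D j k (j < k). *)

definition pairs :: "nat \<Rightarrow> (nat \<times> nat) set" where
  "pairs n = {(j, k). 1 \<le> j \<and> j < k \<and> k \<le> n}"

definition arc_edges :: "nat \<Rightarrow> nat \<Rightarrow> nat \<Rightarrow> bool \<Rightarrow> nat set" where
  "arc_edges n j k b = (if b then {1..n} - {j..<k} else {j..<k})"

definition load :: "nat \<Rightarrow> (nat \<Rightarrow> nat \<Rightarrow> nat \<Rightarrow> bool \<Rightarrow> nat) \<Rightarrow> nat \<Rightarrow> nat \<Rightarrow> nat" where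
  "load n t i e =
     (\<Sum>(j, k)\<in>pairs n. (if e \<in> arc_edges n j k False then t i j k False else 0)
                       + (if e \<in> arc_edges n j k True then t i j k True else 0))"

definition feasible :: "nat \<Rightarrow> nat \<Rightarrow> (nat \<Rightarrow> nat \<Rightarrow> nat) \<Rightarrow> nat
    \<Rightarrow> (nat \<Rightarrow> nat \<Rightarrow> nat \<Rightarrow> bool \<Rightarrow> nat) \<Rightarrow> bool" where
  "feasible n c D R t \<longleftrightarrow>
     (\<forall>(j, k)\<in>pairs n. (\<Sum>i<R. t i j k False + t i j k True) = D j k) \<and>
     (\<forall>i<R. \<forall>e\<in>{1..n}. load n t i e \<le> c)"

definition has_adm :: "nat \<Rightarrow> (nat \<Rightarrow> nat \<Rightarrow> nat \<Rightarrow> bool \<Rightarrow> nat) \<Rightarrow> nat \<Rightarrow> nat \<Rightarrow> bool" where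
  "has_adm n t i j \<longleftrightarrow>
     (\<exists>k\<in>{1..n}. k \<noteq> j \<and> t i (min j k) (max j k) False + t i (min j k) (max j k) True > 0)"

definition cost :: "nat \<Rightarrow> nat \<Rightarrow> (nat \<Rightarrow> nat \<Rightarrow> nat \<Rightarrow> bool \<Rightarrow> nat) \<Rightarrow> nat" where
  "cost n R t = (\<Sum>i<R. card {j\<in>{1..n}. has_adm n t i j})"

definition min_cost :: "nat \<Rightarrow> nat \<Rightarrow> (nat \<Rightarrow> nat \<Rightarrow> nat) \<Rightarrow> nat" where
  "min_cost n c D = (LEAST x. \<exists>R t. feasible n c D R t \<and> cost n R t = x)"

definition fval :: "nat \<Rightarrow> nat \<Rightarrow> real" where
  "fval c d = real d / (2 * real c)"

definition blocksize :: "nat \<Rightarrow> nat \<Rightarrow> nat \<Rightarrow> nat" where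
  "blocksize n c d =
     (let s = nat \<lfloor>sqrt (2 / fval c d)\<rfloor> in
      if s < 2 then 2 else if s > n then n else s)"

definition algA_large :: "nat \<Rightarrow> nat \<Rightarrow> nat \<Rightarrow> nat
    \<Rightarrow> (nat \<Rightarrow> nat \<Rightarrow> nat \<Rightarrow> bool \<Rightarrow> nat) \<Rightarrow> bool" where
  "algA_large n c d R t \<longleftrightarrow>
     (\<exists>g :: nat \<Rightarrow> nat \<times> nat.
        (\<forall>i<R. g i \<in> pairs n) \<and>
        (\<forall>p\<in>pairs n. card {i. i < R \<and> g i = p} = nat \<lceil>fval c d\<rceil>) \<and>
        (\<forall>i<R. \<forall>p\<in>pairs n. p \<noteq> g i \<longrightarrow>
            t i (fst p) (snd p) False = 0 \<and> t i (fst p) (snd p) True = 0) \<and>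
        feasible n c (\<lambda>_ _. d) R t)"

(* amounts a (arc False, length k-j) and b (arc True, length n-(k-j)):
   floor(d/2) on the longer arc, ceil(d/2) on the shorter arc, ties arbitrary *)
definition split_ok :: "nat \<Rightarrow> nat \<Rightarrow> nat \<Rightarrow> nat \<Rightarrow> nat \<Rightarrow> nat \<Rightarrow> bool" where
  "split_ok n d j k a b \<longleftrightarrow>
     (k - j < n - (k - j) \<longrightarrow> a = (d + 1) div 2 \<and> b = d div 2) \<and>
     (k - j > n - (k - j) \<longrightarrow> a = d div 2 \<and> b = (d + 1) div 2) \<and>
     (k - j = n - (k - j) \<longrightarrow>
        (a = (d + 1) div 2 \<and> b = d div 2) \<or> (a = d div 2 \<and> b = (d + 1) div 2))"

definition algA_small :: "nat \<Rightarrow> nat \<Rightarrow> nat \<Rightarrow> nat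
    \<Rightarrow> (nat \<Rightarrow> nat \<Rightarrow> nat \<Rightarrow> bool \<Rightarrow> nat) \<Rightarrow> bool" where
  "algA_small n c d R t \<longleftrightarrow>
     (let M = blocksize n c d; \<mu> = M div 2 in
      \<exists>(F :: nat set set) (blk :: nat set set \<Rightarrow> nat set) (bs :: nat set list).
        (\<forall>A\<in>F. A \<subseteq> {1..n} \<and> card A = \<mu>) \<and>
        finite F \<and> card F = nat \<lceil>real n / real \<mu>\<rceil> \<and>
        \<Union>F = {1..n} \<and>
        (\<forall>A\<in>F. \<forall>B\<in>F. A \<noteq> B \<longrightarrow>
            A \<union> B \<subseteq> blk {A, B} \<and> blk {A, B} \<subseteq> {1..n} \<and> card (blk {A, B}) = M) \<and>
        distinct bs \<and>
        set bs = (if card F = 1 then {{1..n}}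
                  else {blk {A, B} | A B. A \<in> F \<and> B \<in> F \<and> A \<noteq> B}) \<and>
        R = length bs \<and>
        (\<forall>i<R. \<forall>(j, k)\<in>pairs n.
            (if j \<in> bs ! i \<and> k \<in> bs ! i \<and> \<not> (\<exists>i'<i. j \<in> bs ! i' \<and> k \<in> bs ! i')
             then split_ok n d j k (t i j k False) (t i j k True)
             else t i j k False = 0 \<and> t i j k True = 0)))"

definition algA :: "nat \<Rightarrow> nat \<Rightarrow> nat \<Rightarrow> nat
    \<Rightarrow> (nat \<Rightarrow> nat \<Rightarrow> nat \<Rightarrow> bool \<Rightarrow> nat) \<Rightarrow> bool" where
  "algA n c d R t \<longleftrightarrow>
     (if fval c d \<ge> 1 then algA_large n c d R t else algA_small n c d R t)"

end

theory Submission
  imports Defs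
begin


definition adms :: "nat \<Rightarrow> (nat \<Rightarrow> nat \<Rightarrow> nat \<Rightarrow> bool \<Rightarrow> nat) \<Rightarrow> nat \<Rightarrow> nat set" where
  "adms n t i = {j\<in>{1..n}. has_adm n t i j}"

lemma finite_pairs: "finite (pairs n)"
proof -
  have "pairs n \<subseteq> {1..n} \<times> {1..n}" by (auto simp: pairs_def)
  then show ?thesis by (rule finite_subset) auto
qed

lemma adms_sub: "adms n t i \<subseteq> {1..n}" by (auto simp: adms_def)
lemma finite_adms: "finite (adms n t i)" by (rule finite_subset[OF adms_sub]) simp

lemma cost_adms: "cost n R t = (\<Sum>i<R. card (adms n t i))"
  by (simp add: cost_def adms_def)

lemma pos_adm:
  assumes "(j, k) \<in> pairs n" "t i j k b > 0"
  shows "j \<in> adms n t i \<and> k \<in> adms n t i"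
proof -
  from assms(1) have jk: "1 \<le> j" "j < k" "k \<le> n" by (auto simp: pairs_def)
  have s: "t i j k False + t i j k True > 0" using assms(2) by (cases b) auto
  have "has_adm n t i j" unfolding has_adm_def
    using jk s by (intro bexI[of _ k]) auto
  moreover have "has_adm n t i k" unfolding has_adm_def
    using jk s by (intro bexI[of _ j]) auto
  ultimately show ?thesis using jk by (auto simp: adms_def)
qed

lemma t_le_d:
  assumes "feasible n c (\<lambda>_ _. d) R t" "(j, k) \<in> pairs n" "i < R"
  shows "t i j k b \<le> d"
proof -
  have "(\<Sum>i<R. t i j k False + t i j k True) = d" using assms(1,2) by (auto simp: feasible_def)
  moreover have "t i j k False + t i j k True \<le> (\<Sum>i<R. t i j k False + t i j k True)"
    using assms(3) by (intro member_le_sum) auto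
  ultimately show ?thesis by (cases b) auto
qed

lemma sum_ind: "finite S \<Longrightarrow> (\<Sum>s\<in>S. if s \<in> A then (x::nat) else 0) = x * card (S\<inter>A)"
  by (simp add: sum.If_cases)

lemma load_sum:
  fixes S :: "nat set"
  assumes "S \<subseteq> {1..n}"
  shows "(\<Sum>s\<in>S. load n t i s) =
    (\<Sum>(j,k)\<in>pairs n. t i j k False * card (S \<inter> {j..<k}) + t i j k True * card (S - {j..<k}))"
proof -
  have fS: "finite S" by (rule finite_subset[OF assms]) simp
  have "(\<Sum>s\<in>S. load n t i s) = (\<Sum>(j,k)\<in>pairs n. \<Sum>s\<in>S.
      (if s \<in> arc_edges n j k False then t i j k False else 0)
      + (if s \<in> arc_edges n j k True then t i j k True else 0))"
    unfolding load_def by (subst sum.swap) (simp add: case_prod_beta)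
  also have "\<dots> = (\<Sum>(j,k)\<in>pairs n. t i j k False * card (S \<inter> {j..<k}) + t i j k True * card (S - {j..<k}))"
  proof (rule sum.cong[OF refl], clarify)
    fix j k
    have e: "S \<inter> ({1..n} - {j..<k}) = S - {j..<k}" using assms by auto
    show "(\<Sum>s\<in>S. (if s \<in> arc_edges n j k False then t i j k False else 0)
      + (if s \<in> arc_edges n j k True then t i j k True else 0)) =
      t i j k False * card (S \<inter> {j..<k}) + t i j k True * card (S - {j..<k})"
      by (simp only: arc_edges_def if_True if_False sum.distrib sum_ind[OF fS] e mult.commute)
  qed
  finally show ?thesis .
qed


lemma fiber_F:
  fixes S :: "nat set"
  assumes fS: "finite S" and jS: "j \<in> S"
  shows "card {k\<in>S. j < k \<and> card (S \<inter> {j..<k}) \<le> h} \<le> h"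
proof -
  let ?A = "{k\<in>S. j < k \<and> card (S \<inter> {j..<k}) \<le> h}"
  let ?g = "\<lambda>k. card (S \<inter> {j..<k})"
  have "strict_mono_on ?A ?g"
  proof (rule strict_mono_onI)
    fix r s assume "r \<in> ?A" "s \<in> ?A" "r < s"
    then have "S \<inter> {j..<r} \<subseteq> S \<inter> {j..<s}" "r \<in> S \<inter> {j..<s}" "r \<notin> S \<inter> {j..<r}" by auto
    then have "S \<inter> {j..<r} \<subset> S \<inter> {j..<s}" by blast
    then show "?g r < ?g s" using fS by (intro psubset_card_mono) auto
  qed
  then have inj: "inj_on ?g ?A" by (rule strict_mono_on_imp_inj_on)
  have "?g ` ?A \<subseteq> {1..h}"
  proof
    fix x assume "x \<in> ?g ` ?A"
    then obtain k where k: "k \<in> ?A" "x = ?g k" by blast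
    have "j \<in> S \<inter> {j..<k}" using k jS by auto
    then have "S \<inter> {j..<k} \<noteq> {}" by blast
    then have "?g k \<noteq> 0" using fS by simp
    then have "x \<ge> 1" using k(2) by linarith
    moreover have "x \<le> h" using k by simp
    ultimately show "x \<in> {1..h}" by simp
  qed
  then have "card (?g ` ?A) \<le> h" using card_mono[of "{1..h}"] by fastforce
  then show ?thesis using card_image[OF inj] by simp
qed

lemma fiber_T:
  fixes S :: "nat set"
  assumes fS: "finite S" and kS: "k \<in> S"
  shows "card {j\<in>S. j < k \<and> card (S - {j..<k}) \<le> h} \<le> h"
proof -
  let ?A = "{j\<in>S. j < k \<and> card (S - {j..<k}) \<le> h}"
  let ?g = "\<lambda>j. card (S - {j..<k})"
  have "strict_mono_on ?A ?g"
  proof (rule strict_mono_onI)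
    fix r s assume "r \<in> ?A" "s \<in> ?A" "r < s"
    then have "S - {r..<k} \<subseteq> S - {s..<k}" "r \<in> S - {s..<k}" "r \<notin> S - {r..<k}" by auto
    then have "S - {r..<k} \<subset> S - {s..<k}" by blast
    then show "?g r < ?g s" using fS by (intro psubset_card_mono) auto
  qed
  then have inj: "inj_on ?g ?A" by (rule strict_mono_on_imp_inj_on)
  have "?g ` ?A \<subseteq> {1..h}"
  proof
    fix x assume "x \<in> ?g ` ?A"
    then obtain j where j: "j \<in> ?A" "x = ?g j" by blast
    have "k \<in> S - {j..<k}" using j kS by auto
    then have "S - {j..<k} \<noteq> {}" by blast
    then have "?g j \<noteq> 0" using fS by simp
    then have "x \<ge> 1" using j(2) by linarith
    moreover have "x \<le> h" using j by simp
    ultimately show "x \<in> {1..h}" by simp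
  qed
  then have "card (?g ` ?A) \<le> h" using card_mono[of "{1..h}"] by fastforce
  then show ?thesis using card_image[OF inj] by simp
qed

lemma short_F:
  "card {(j,k)\<in>pairs n. t i j k False > 0 \<and> card (adms n t i \<inter> {j..<k}) \<le> h} \<le> h * card (adms n t i)"
proof -
  let ?S = "adms n t i"
  have fS: "finite ?S" by (rule finite_adms)
  let ?B = "\<lambda>j. {k\<in>?S. j < k \<and> card (?S \<inter> {j..<k}) \<le> h}"
  have sub: "{(j,k)\<in>pairs n. t i j k False > 0 \<and> card (?S \<inter> {j..<k}) \<le> h} \<subseteq> Sigma ?S ?B"
  proof
    fix p assume "p \<in> {(j,k)\<in>pairs n. t i j k False > 0 \<and> card (?S \<inter> {j..<k}) \<le> h}"
    then obtain j k where a: "p = (j,k)" "(j,k) \<in> pairs n" "t i j k False > 0" "card (?S \<inter> {j..<k}) \<le> h" by blast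
    from pos_adm[of j k n t i False, OF a(2,3)] a show "p \<in> Sigma ?S ?B" by (auto simp: pairs_def)
  qed
  have "finite (Sigma ?S ?B)" using fS by auto
  then have "card {(j,k)\<in>pairs n. t i j k False > 0 \<and> card (?S \<inter> {j..<k}) \<le> h} \<le> card (Sigma ?S ?B)"
    using sub card_mono by blast
  also have "\<dots> = (\<Sum>j\<in>?S. card (?B j))" using fS by (intro card_SigmaI) auto
  also have "\<dots> \<le> (\<Sum>j\<in>?S. h)" using fiber_F[OF fS] by (intro sum_mono) auto
  finally show ?thesis by (simp add: mult.commute)
qed

lemma short_T:
  "card {(j,k)\<in>pairs n. t i j k True > 0 \<and> card (adms n t i - {j..<k}) \<le> h} \<le> h * card (adms n t i)"
proof -
  let ?S = "adms n t i"
  have fS: "finite ?S" by (rule finite_adms)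
  let ?B = "\<lambda>k. {j\<in>?S. j < k \<and> card (?S - {j..<k}) \<le> h}"
  have sub: "{(j,k)\<in>pairs n. t i j k True > 0 \<and> card (?S - {j..<k}) \<le> h} \<subseteq> (\<lambda>(k,j). (j,k)) ` Sigma ?S ?B"
  proof
    fix p assume "p \<in> {(j,k)\<in>pairs n. t i j k True > 0 \<and> card (?S - {j..<k}) \<le> h}"
    then obtain j k where a: "p = (j,k)" "(j,k) \<in> pairs n" "t i j k True > 0" "card (?S - {j..<k}) \<le> h" by blast
    from pos_adm[of j k n t i True, OF a(2,3)] a have "(k,j) \<in> Sigma ?S ?B" by (auto simp: pairs_def)
    then show "p \<in> (\<lambda>(k,j). (j,k)) ` Sigma ?S ?B" using a(1) by force
  qed
  have "finite (Sigma ?S ?B)" using fS by auto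
  then have "card {(j,k)\<in>pairs n. t i j k True > 0 \<and> card (?S - {j..<k}) \<le> h} \<le> card ((\<lambda>(k,j). (j,k)) ` Sigma ?S ?B)"
    using sub card_mono by blast
  also have "\<dots> \<le> card (Sigma ?S ?B)" using card_image_le \<open>finite (Sigma ?S ?B)\<close> by blast
  also have "\<dots> = (\<Sum>j\<in>?S. card (?B j))" using fS by (intro card_SigmaI) auto
  also have "\<dots> \<le> (\<Sum>j\<in>?S. h)" using fiber_T[OF fS] by (intro sum_mono) auto
  finally show ?thesis by (simp add: mult.commute)
qed


lemma card_filter_pairs:
  "(\<Sum>(j,k)\<in>pairs n. if P j k then (1::nat) else 0) = card {(j,k)\<in>pairs n. P j k}"
proof -
  have "(\<Sum>(j,k)\<in>pairs n. if P j k then (1::nat) else 0) = (\<Sum>x\<in>pairs n. if case_prod P x then 1 else 0)"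
    by (simp add: case_prod_beta)
  also have "\<dots> = card (pairs n \<inter> {x. case_prod P x})" using finite_pairs by (simp add: sum.If_cases)
  also have "pairs n \<inter> {x. case_prod P x} = {(j,k)\<in>pairs n. P j k}" by auto
  finally show ?thesis .
qed

lemma ring_bound:
  assumes feas: "feasible n c (\<lambda>_ _. d) R t" and i: "i < R"
  shows "(h+1) * (\<Sum>(j,k)\<in>pairs n. t i j k False + t i j k True) \<le> card (adms n t i) * (2*d*h*(h+1) + c)"
proof -
  let ?S = "adms n t i"
  let ?K = "card ?S"
  let ?a = "\<lambda>j k. card (?S \<inter> {j..<k})"
  let ?b = "\<lambda>j k. card (?S - {j..<k})"
  let ?PF = "\<lambda>j k. t i j k False > 0 \<and> ?a j k \<le> h"
  let ?PT = "\<lambda>j k. t i j k True > 0 \<and> ?b j k \<le> h"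
  have pp: "(h+1) * (t i j k False + t i j k True) \<le>
      (h+1)*d*((if ?PF j k then 1 else 0) + (if ?PT j k then 1 else 0))
      + (t i j k False * ?a j k + t i j k True * ?b j k)" if jk: "(j,k) \<in> pairs n" for j k
  proof -
    have F: "(h+1) * t i j k False \<le> (h+1)*d*(if ?PF j k then 1 else 0) + t i j k False * ?a j k"
    proof (cases "?PF j k")
      case True
      have le: "(h+1) * t i j k False \<le> (h+1)*d" using t_le_d[OF feas jk i, of False] by (rule mult_left_mono) simp
      have eq: "(if ?PF j k then 1 else 0) = (1::nat)" using True by simp
      show ?thesis by (rule trans_le_add1) (unfold eq mult_1_right, rule le)
    next
      case False
      then have "t i j k False = 0 \<or> ?a j k \<ge> h+1" by auto
      then show ?thesis
      proof
        assume "h + 1 \<le> ?a j k"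
        then have "(h+1) * t i j k False \<le> ?a j k * t i j k False" by (rule mult_right_mono) simp
        then show ?thesis by (simp add: mult.commute)
      qed simp
    qed
    have T: "(h+1) * t i j k True \<le> (h+1)*d*(if ?PT j k then 1 else 0) + t i j k True * ?b j k"
    proof (cases "?PT j k")
      case True
      have le: "(h+1) * t i j k True \<le> (h+1)*d" using t_le_d[OF feas jk i, of True] by (rule mult_left_mono) simp
      have eq: "(if ?PT j k then 1 else 0) = (1::nat)" using True by simp
      show ?thesis by (rule trans_le_add1) (unfold eq mult_1_right, rule le)
    next
      case False
      then have "t i j k True = 0 \<or> ?b j k \<ge> h+1" by auto
      then show ?thesis
      proof
        assume "h + 1 \<le> ?b j k"
        then have "(h+1) * t i j k True \<le> ?b j k * t i j k True" by (rule mult_right_mono) simp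
        then show ?thesis by (simp add: mult.commute)
      qed simp
    qed
    from F T show ?thesis by (simp add: algebra_simps)
  qed
  have "(h+1) * (\<Sum>(j,k)\<in>pairs n. t i j k False + t i j k True)
      = (\<Sum>(j,k)\<in>pairs n. (h+1) * (t i j k False + t i j k True))"
    by (simp add: sum_distrib_left case_prod_beta)
  also have "\<dots> \<le> (\<Sum>(j,k)\<in>pairs n. (h+1)*d*((if ?PF j k then 1 else 0) + (if ?PT j k then 1 else 0))
      + (t i j k False * ?a j k + t i j k True * ?b j k))"
    using pp by (intro sum_mono) auto
  also have "\<dots> = (h+1)*d*((\<Sum>(j,k)\<in>pairs n. if ?PF j k then 1 else 0) + (\<Sum>(j,k)\<in>pairs n. if ?PT j k then 1 else 0))
      + (\<Sum>(j,k)\<in>pairs n. t i j k False * ?a j k + t i j k True * ?b j k)"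
    unfolding split_def by (simp only: sum.distrib sum_distrib_left distrib_left add.assoc)
  also have "\<dots> = (h+1)*d*(card {(j,k)\<in>pairs n. ?PF j k} + card {(j,k)\<in>pairs n. ?PT j k})
      + (\<Sum>s\<in>?S. load n t i s)"
    by (simp only: card_filter_pairs load_sum[OF adms_sub])
  also have "\<dots> \<le> (h+1)*d*(h * ?K + h * ?K) + ?K * c"
  proof (rule add_mono)
    show "(h+1)*d*(card {(j,k)\<in>pairs n. ?PF j k} + card {(j,k)\<in>pairs n. ?PT j k}) \<le> (h+1)*d*(h * ?K + h * ?K)"
      using short_F[of n t i h] short_T[of n t i h] by (intro mult_left_mono add_mono) auto
    have "(\<Sum>s\<in>?S. load n t i s) \<le> (\<Sum>s\<in>?S. c)"
      using feas i adms_sub[of n t i] by (intro sum_mono) (auto simp: feasible_def)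
    then show "(\<Sum>s\<in>?S. load n t i s) \<le> ?K * c" by simp
  qed
  also have "\<dots> = ?K * (2*d*h*(h+1) + c)" by (simp add: algebra_simps)
  finally show ?thesis .
qed

lemma total_traffic:
  assumes feas: "feasible n c (\<lambda>_ _. d) R t"
  shows "(\<Sum>i<R. \<Sum>(j,k)\<in>pairs n. t i j k False + t i j k True) = d * card (pairs n)"
proof -
  have "(\<Sum>i<R. \<Sum>(j,k)\<in>pairs n. t i j k False + t i j k True) = (\<Sum>(j,k)\<in>pairs n. \<Sum>i<R. t i j k False + t i j k True)"
    by (subst sum.swap) (simp add: case_prod_beta)
  also have "\<dots> = (\<Sum>(j,k)\<in>pairs n. d)"
    using feas by (intro sum.cong) (auto simp: feasible_def)
  finally show ?thesis by simp
qed

lemma lower_bound: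
  assumes feas: "feasible n c (\<lambda>_ _. d) R t"
  shows "(h+1) * (d * card (pairs n)) \<le> cost n R t * (2*d*h*(h+1) + c)"
proof -
  have "(h+1) * (d * card (pairs n)) = (\<Sum>i<R. (h+1) * (\<Sum>(j,k)\<in>pairs n. t i j k False + t i j k True))"
    by (subst total_traffic[OF feas, symmetric]) (rule sum_distrib_left)
  also have "\<dots> \<le> (\<Sum>i<R. card (adms n t i) * (2*d*h*(h+1) + c))"
    using ring_bound[OF feas] by (intro sum_mono) auto
  also have "\<dots> = cost n R t * (2*d*h*(h+1) + c)" by (simp add: cost_adms sum_distrib_right)
  finally show ?thesis .
qed

lemma cost_ge_n:
  assumes feas: "feasible n c (\<lambda>_ _. d) R t" and n: "n \<ge> 2" and d: "d \<ge> 1"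
  shows "n \<le> cost n R t"
proof -
  have "{1..n} \<subseteq> (\<Union>i<R. adms n t i)"
  proof
    fix j assume j: "j \<in> {1..n}"
    obtain k where k: "k \<in> {1..n}" "k \<noteq> j"
    proof (cases "j = 1")
      case True then show ?thesis using that[of 2] n by auto
    next
      case False then show ?thesis using that[of 1] n j by auto
    qed
    let ?p = "(min j k, max j k)"
    have pp: "?p \<in> pairs n" using j k by (auto simp: pairs_def)
    then have "(\<Sum>i<R. t i (min j k) (max j k) False + t i (min j k) (max j k) True) = d"
      using feas by (auto simp: feasible_def)
    then obtain i where i: "i < R" "t i (min j k) (max j k) False + t i (min j k) (max j k) True > 0"
      using d by (metis (no_types, lifting) gr0I not_one_le_zero sum.neutral lessThan_iff)
    have "has_adm n t i j" unfolding has_adm_def using k i by blast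
    then show "j \<in> (\<Union>i<R. adms n t i)" using i j by (auto simp: adms_def)
  qed
  then have "card {1..n} \<le> card (\<Union>i<R. adms n t i)"
    by (rule card_mono[rotated]) (auto intro: finite_adms)
  also have "\<dots> \<le> (\<Sum>i<R. card (adms n t i))" by (rule card_UN_le) simp
  finally show ?thesis by (simp add: cost_adms)
qed


definition Gc :: "nat \<Rightarrow> nat \<Rightarrow> nat \<Rightarrow> nat \<Rightarrow> bool" where
  "Gc n j k e \<longleftrightarrow> (j \<le> e \<and> e < k \<and> 2*(k-j) \<le> n) \<or> (\<not>(j \<le> e \<and> e < k) \<and> 2*(k-j) \<ge> n)"

lemma contr_bound:
  assumes so: "split_ok n d j k a b" and jk: "j < k" "k \<le> n"
  shows "(if e \<in> arc_edges n j k False then a else 0) + (if e \<in> arc_edges n j k True then b else 0)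
     \<le> d div 2 + d mod 2 * (if Gc n j k e then 1 else 0)"
proof -
  have dd: "(d+1) div 2 = d div 2 + d mod 2" by presburger
  have m: "d mod 2 * (if P then 1 else 0) = (if P then d mod 2 else 0)" for P by simp
  have L: "(k-j < n-(k-j)) = (2*(k-j) < n)" "(k-j > n-(k-j)) = (2*(k-j) > n)" "(k-j = n-(k-j)) = (2*(k-j) = n)"
    using jk by arith+
  have so': "(2*(k-j) < n \<longrightarrow> a = d div 2 + d mod 2 \<and> b = d div 2) \<and>
     (2*(k-j) > n \<longrightarrow> a = d div 2 \<and> b = d div 2 + d mod 2) \<and>
     (2*(k-j) = n \<longrightarrow> (a = d div 2 + d mod 2 \<and> b = d div 2) \<or> (a = d div 2 \<and> b = d div 2 + d mod 2))"
    using so unfolding split_ok_def L dd .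
  have tri: "2*(k-j) < n \<or> 2*(k-j) > n \<or> 2*(k-j) = n" by arith
  show ?thesis
  proof (cases "e \<in> {j..<k}")
    case True
    then have l: "(if e \<in> arc_edges n j k False then a else 0) + (if e \<in> arc_edges n j k True then b else 0) = a"
      by (simp add: arc_edges_def)
    have g: "Gc n j k e = (2*(k-j) \<le> n)" using True by (auto simp: Gc_def)
    show ?thesis unfolding l m g using tri so' by auto
  next
    case False
    then have "e \<notin> arc_edges n j k False" by (simp add: arc_edges_def)
    then have l: "(if e \<in> arc_edges n j k False then a else 0) + (if e \<in> arc_edges n j k True then b else 0) \<le> b"
      by simp
    have g: "Gc n j k e = (2*(k-j) \<ge> n)" using False by (auto simp: Gc_def)
    have "b \<le> d div 2 + (if 2*(k-j) \<ge> n then d mod 2 else 0)" using tri so' by auto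
    then show ?thesis using l unfolding m g by linarith
  qed
qed

definition pos :: "nat \<Rightarrow> nat \<Rightarrow> nat \<Rightarrow> nat" where
  "pos n e x = (if x > e then x - e - 1 else x + n - e - 1)"

lemma G_ahead:
  assumes "j < k" "k \<le> n" "1 \<le> j" "1 \<le> e" "e \<le> n" "Gc n j k e"
  shows "if j \<le> e \<and> e < k then (2 * pos n e k + 2 \<le> n \<and> \<not> 2 * pos n e j + 2 \<le> n)
         else (2 * pos n e j + 2 \<le> n \<and> \<not> 2 * pos n e k + 2 \<le> n)"
proof (cases "j \<le> e \<and> e < k")
  case True
  then have g: "2*(k-j) \<le> n" using assms(6) by (simp add: Gc_def)
  have "pos n e k = k - e - 1" "pos n e j = j + n - e - 1" using True by (auto simp: pos_def)
  then show ?thesis using True g assms(1-5) by (simp; arith)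
next
  case False
  then have g: "2*(k-j) \<ge> n" using assms(6) unfolding Gc_def by blast
  show ?thesis
  proof (cases "e < j")
    case True
    have "pos n e k = k - e - 1" "pos n e j = j - e - 1" using True assms(1) by (auto simp: pos_def)
    then show ?thesis using True False g assms(1-5) by (simp; arith)
  next
    case F2: False
    then have ek: "e \<ge> k" using False by simp
    have "pos n e k = k + n - e - 1" "pos n e j = j + n - e - 1" using ek assms(1) by (auto simp: pos_def)
    then show ?thesis using ek False g assms(1-5) by (simp; arith)
  qed
qed

lemma card_pairs_in:
  fixes B :: "nat set"
  assumes "finite B"
  shows "2 * card {(j,k). j \<in> B \<and> k \<in> B \<and> j < k} + card B = card B * card B"
proof -
  let ?U = "{(j,k). j \<in> B \<and> k \<in> B \<and> j < k}"
  let ?L = "{(j,k). j \<in> B \<and> k \<in> B \<and> k < j}"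
  let ?D = "(\<lambda>x. (x,x)) ` B"
  have "B \<times> B = ?U \<union> ?L \<union> ?D" by auto
  moreover have fU: "finite ?U" "finite ?L" using assms
    by (auto intro: finite_subset[of _ "B \<times> B"])
  moreover have "?L = (\<lambda>(j,k). (k,j)) ` ?U" by auto
  moreover have "card ((\<lambda>(j,k). (k,j)) ` ?U) = card ?U"
    by (rule card_image) (auto simp: inj_on_def)
  moreover have "card ?D = card B" by (rule card_image) (auto simp: inj_on_def)
  moreover have "(?U \<union> ?L) \<inter> ?D = {}" "?U \<inter> ?L = {}" by auto
  ultimately have "card (B \<times> B) = card ?U + card ?U + card B"
    using assms by (simp add: card_Un_disjoint)
  then show ?thesis by (simp add: card_cartesian_product)
qed

lemma four_ab: "4 * (a * (m - a)) \<le> m * (m::nat)"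
proof (cases "a \<le> m")
  case True
  then obtain b where b: "m = a + b" by (metis le_add_diff_inverse)
  have e: "(int a + int b)*(int a + int b) - 4*(int a*int b) = (int a - int b)*(int a - int b)"
    by (simp add: algebra_simps)
  have "0 \<le> (int a - int b)*(int a - int b)" by simp
  then have "4*(int a*int b) \<le> (int a+int b)*(int a+int b)" using e by linarith
  then have "int (4 * (a * b)) \<le> int ((a + b) * (a + b))" by simp
  then have "4 * (a * b) \<le> (a + b) * (a + b)" by (simp only: of_nat_le_iff)
  then show ?thesis using b by simp
qed simp

lemma G_count:
  assumes B: "B \<subseteq> {1..n}" and e: "e \<in> {1..n}"
  shows "4 * card {(j,k)\<in>pairs n. j \<in> B \<and> k \<in> B \<and> Gc n j k e} \<le> card B * card B"
proof -
  let ?Ah = "{x. 2 * pos n e x + 2 \<le> n}"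
  let ?G = "{(j,k)\<in>pairs n. j \<in> B \<and> k \<in> B \<and> Gc n j k e}"
  let ?phi = "\<lambda>(j,k). if j \<le> e \<and> e < k then (k,j) else (j::nat,k::nat)"
  have fB: "finite B" by (rule finite_subset[OF B]) simp
  have inj: "inj_on ?phi ?G"
    by (auto simp: inj_on_def pairs_def split: if_splits)
  have img: "?phi ` ?G \<subseteq> (B \<inter> ?Ah) \<times> (B - ?Ah)"
  proof
    fix x assume "x \<in> ?phi ` ?G"
    then obtain j k where jk: "(j,k) \<in> ?G" "x = ?phi (j,k)" by blast
    then have p: "j < k" "k \<le> n" "1 \<le> j" "Gc n j k e" "j \<in> B" "k \<in> B" by (auto simp: pairs_def)
    have "1 \<le> e" "e \<le> n" using e by auto
    from G_ahead[OF p(1,2,3) this p(4)] show "x \<in> (B \<inter> ?Ah) \<times> (B - ?Ah)"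
      using jk(2) p(5,6) by (auto split: if_splits)
  qed
  have "card ?G = card (?phi ` ?G)" using card_image[OF inj] by simp
  also have "\<dots> \<le> card ((B \<inter> ?Ah) \<times> (B - ?Ah))" using img fB by (intro card_mono) auto
  also have "\<dots> = card (B \<inter> ?Ah) * (card B - card (B \<inter> ?Ah))"
    using fB by (simp add: card_cartesian_product card_Diff_subset_Int Int_commute)
  finally have "4 * card ?G \<le> 4 * (card (B \<inter> ?Ah) * (card B - card (B \<inter> ?Ah)))" by simp
  also have "\<dots> \<le> card B * card B" by (rule four_ab)
  finally show ?thesis .
qed

lemma ring_load:
  assumes B: "B \<subseteq> {1..n}"
  and tdef: "\<forall>(j,k)\<in>pairs n. if j \<in> B \<and> k \<in> B \<and> Q j k then split_ok n d j k (t i j k False) (t i j k True)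
                 else t i j k False = 0 \<and> t i j k True = 0"
  and e: "e \<in> {1..n}"
  shows "4 * load n t i e \<le> d div 2 * 2 * (card B * card B - card B) + d mod 2 * (card B * card B)"
proof -
  let ?IB = "\<lambda>j k. j \<in> B \<and> k \<in> B"
  have fB: "finite B" by (rule finite_subset[OF B]) simp
  have pp: "(if e \<in> arc_edges n j k False then t i j k False else 0) + (if e \<in> arc_edges n j k True then t i j k True else 0)
     \<le> d div 2 * (if ?IB j k then 1 else 0) + d mod 2 * (if ?IB j k \<and> Gc n j k e then 1 else 0)"
    if jk: "(j,k) \<in> pairs n" for j k
  proof (cases "?IB j k \<and> Q j k")
    case True
    then have "split_ok n d j k (t i j k False) (t i j k True)" using tdef jk by auto
    from contr_bound[OF this, of e] jk True show ?thesis by (auto simp: pairs_def)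
  next
    case False
    then have "t i j k False = 0 \<and> t i j k True = 0" using tdef jk by auto
    then show ?thesis by simp
  qed
  have "load n t i e \<le> (\<Sum>(j,k)\<in>pairs n. d div 2 * (if ?IB j k then 1 else 0) + d mod 2 * (if ?IB j k \<and> Gc n j k e then 1 else 0))"
    unfolding load_def using pp by (intro sum_mono) auto
  also have "\<dots> = d div 2 * (\<Sum>(j,k)\<in>pairs n. if ?IB j k then 1 else 0) + d mod 2 * (\<Sum>(j,k)\<in>pairs n. if ?IB j k \<and> Gc n j k e then 1 else 0)"
    unfolding split_def by (simp only: sum.distrib sum_distrib_left)
  also have "\<dots> = d div 2 * card {(j,k)\<in>pairs n. ?IB j k} + d mod 2 * card {(j,k)\<in>pairs n. ?IB j k \<and> Gc n j k e}"
    by (simp only: card_filter_pairs)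
  finally have L: "load n t i e \<le> d div 2 * card {(j,k)\<in>pairs n. ?IB j k} + d mod 2 * card {(j,k)\<in>pairs n. ?IB j k \<and> Gc n j k e}" .
  have "{(j,k)\<in>pairs n. ?IB j k} = {(j,k). j \<in> B \<and> k \<in> B \<and> j < k}" using B by (auto simp: pairs_def)
  then have P2: "2 * card {(j,k)\<in>pairs n. ?IB j k} = card B * card B - card B" using card_pairs_in[OF fB] by simp
  have G4: "4 * card {(j,k)\<in>pairs n. ?IB j k \<and> Gc n j k e} \<le> card B * card B"
    using G_count[OF B e] by (simp add: conj_assoc)
  have "4 * load n t i e \<le> d div 2 * (2 * (2 * card {(j,k)\<in>pairs n. ?IB j k})) + d mod 2 * (4 * card {(j,k)\<in>pairs n. ?IB j k \<and> Gc n j k e})"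
    using L by simp
  also have "\<dots> \<le> d div 2 * 2 * (card B * card B - card B) + d mod 2 * (card B * card B)"
    unfolding P2 using G4 by (intro add_mono mult_left_mono) auto
  finally show ?thesis .
qed


lemma fval_ge1: "c \<ge> 1 \<Longrightarrow> (fval c d \<ge> 1) = (d \<ge> 2*c)"
proof -
  assume "c \<ge> 1"
  then have "(fval c d \<ge> 1) = (real c * 2 \<le> real d)" by (simp add: fval_def field_simps)
  also have "real c * 2 = real (2*c)" by simp
  finally show ?thesis by (simp only: of_nat_le_iff)
qed

lemma s_props:
  assumes c: "c \<ge> 1" and d: "d \<ge> 1"
  defines "s \<equiv> nat \<lfloor>sqrt (2 / fval c d)\<rfloor>"
  shows "d * (s*s) \<le> 4*c" "4*c < d * ((s+1)*(s+1))"
proof -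
  let ?x = "4 * real c / real d"
  have x: "2 / fval c d = ?x" using c d by (simp add: fval_def field_simps)
  have x0: "?x \<ge> 0" by simp
  have sq0: "sqrt ?x \<ge> 0" by simp
  have rs: "real s = of_int \<lfloor>sqrt ?x\<rfloor>" unfolding s_def x using sq0 by simp
  have fl1: "real s \<le> sqrt ?x" unfolding rs by (rule of_int_floor_le)
  have fl2: "sqrt ?x < real s + 1" unfolding rs by (rule real_of_int_floor_add_one_gt)
  have sx: "sqrt ?x * sqrt ?x = ?x" using x0 by simp
  have "real s * real s \<le> sqrt ?x * sqrt ?x" using fl1 by (intro mult_mono) auto
  then have "real s * real s \<le> ?x" using sx by simp
  then have "real d * (real s * real s) \<le> 4 * real c" using d by (simp add: field_simps)
  then have "real (d * (s*s)) \<le> real (4*c)" by simp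
  then show "d * (s*s) \<le> 4*c" by (simp only: of_nat_le_iff)
  have "sqrt ?x * sqrt ?x < (real s + 1) * (real s + 1)" using fl2 sq0 by (intro mult_strict_mono) auto
  then have "?x < (real s + 1) * (real s + 1)" using sx by simp
  then have "4 * real c < real d * ((real s + 1) * (real s + 1))" using d by (simp add: field_simps)
  moreover have "real (d * ((s+1)*(s+1))) = real d * ((real s + 1) * (real s + 1))" "real (4*c) = 4 * real c" by (simp_all add: algebra_simps)
  ultimately have "real (4*c) < real (d * ((s+1)*(s+1)))" by simp
  then show "4*c < d * ((s+1)*(s+1))" by (simp only: of_nat_less_iff)
qed

lemma ceil_props:
  assumes mu: "\<mu> \<ge> 1" "2 * \<mu> \<le> n"
  defines "q \<equiv> nat \<lceil>real n / real \<mu>\<rceil>"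
  shows "n \<le> \<mu> * q" "\<mu> * q < n + \<mu>" "q \<ge> 2"
proof -
  let ?x = "real n / real \<mu>"
  have x0: "?x \<ge> 0" by simp
  have rq: "real q = of_int \<lceil>?x\<rceil>" unfolding q_def using x0 by simp
  have c1: "?x \<le> real q" unfolding rq by simp
  have c2: "real q - 1 < ?x" unfolding rq using ceiling_correct[of ?x] by linarith
  have mpos: "real \<mu> > 0" using mu by simp
  have "real n \<le> real \<mu> * real q" using c1 mpos by (simp add: field_simps)
  then show "n \<le> \<mu> * q" by (simp only: of_nat_mult[symmetric] of_nat_le_iff)
  have "real \<mu> * real q < real n + real \<mu>" using c2 mpos by (simp add: field_simps)
  then show "\<mu> * q < n + \<mu>" by (simp only: of_nat_mult[symmetric] of_nat_add[symmetric] of_nat_less_iff)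
  have "?x \<ge> 2" using mu mpos by (simp add: field_simps)
  then have "real q \<ge> 2" using c1 by linarith
  then show "q \<ge> 2" by simp
qed


lemma arith_small:
  fixes \<mu> q n P X :: nat
  assumes mu: "\<mu> \<ge> 1" and n: "n \<ge> 2*\<mu>+1" and q: "\<mu>*q < n+\<mu>"
    and P: "2*P + n = n*n" and X: "\<mu>*P \<le> X*(3*\<mu>*\<mu>+1)"
  shows "q*(q-1)*(2*\<mu>+1) \<le> 24*X"
proof -
  have s1: "\<mu>*q \<le> n+\<mu>-1" using q by simp
  have s1': "\<mu>*(q-1) \<le> n-1" using q by (simp add: diff_mult_distrib2)
  have s2: "(n+\<mu>-1)*(2*\<mu>+1) \<le> 3*\<mu>*n"
  proof -
    have e0: "int (n+\<mu>-1) = int n + int \<mu> - 1" using mu by (simp add: of_nat_diff)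
    have e1: "int ((n+\<mu>-1)*(2*\<mu>+1)) = (int n + int \<mu> - 1)*(2*int \<mu>+1)" by (simp only: of_nat_mult e0) simp
    have e2: "int (3*\<mu>*n) = 3*int \<mu>*int n" by simp
    have e3: "3*int \<mu>*int n - (int n + int \<mu> - 1)*(2*int \<mu>+1) = (int \<mu> - 1) * (int n - 2*int \<mu> - 1)"
      by (simp add: algebra_simps)
    have "(int \<mu> - 1) * (int n - 2*int \<mu> - 1) \<ge> 0" using mu n by simp
    then have "int ((n+\<mu>-1)*(2*\<mu>+1)) \<le> int (3*\<mu>*n)" using e1 e2 e3 by linarith
    then show ?thesis by (simp only: of_nat_le_iff)
  qed
  have P2: "n*(n-1) = 2*P" using P by (simp add: diff_mult_distrib2)
  have "(\<mu>*\<mu>) * (q*(q-1)*(2*\<mu>+1)) = (\<mu>*q)*(\<mu>*(q-1))*(2*\<mu>+1)" by (simp add: algebra_simps)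
  also have "\<dots> \<le> (n+\<mu>-1)*(n-1)*(2*\<mu>+1)" using s1 s1' by (intro mult_mono) auto
  also have "\<dots> = ((n+\<mu>-1)*(2*\<mu>+1))*(n-1)" by (metis mult.assoc mult.commute)
  also have "\<dots> \<le> (3*\<mu>*n)*(n-1)" using s2 by (rule mult_right_mono) simp
  also have "\<dots> = 3*\<mu>*(n*(n-1))" by (simp only: mult.assoc)
  also have "\<dots> = 3*\<mu>*(2*P)" by (simp only: P2)
  also have "\<dots> = 6*(\<mu>*P)" by simp
  also have "\<dots> \<le> 6*(X*(3*\<mu>*\<mu>+1))" using X by simp
  also have "\<dots> \<le> 6*(X*(4*(\<mu>*\<mu>)))" using mu by (intro mult_left_mono) (auto simp: algebra_simps)
  also have "\<dots> = (\<mu>*\<mu>) * (24*X)" by (simp add: algebra_simps)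
  finally have "(\<mu>*\<mu>) * (q*(q-1)*(2*\<mu>+1)) \<le> (\<mu>*\<mu>) * (24*X)" .
  then show ?thesis using mu by simp
qed


lemma div_block:
  fixes Q m P :: nat
  assumes Q: "Q \<ge> 1" and m: "m < P"
  shows "{i. i < Q*P \<and> i div Q = m} = {m*Q..<m*Q+Q}"
proof (intro set_eqI iffI)
  fix i assume "i \<in> {i. i < Q*P \<and> i div Q = m}"
  then have "i div Q = m" by simp
  then show "i \<in> {m*Q..<m*Q+Q}"
  proof -
    have "i = m*Q + i mod Q" using div_mult_mod_eq[of i Q] \<open>i div Q = m\<close> by simp
    moreover have "i mod Q < Q" using Q by simp
    ultimately show ?thesis by simp
  qed
next
  fix i assume i: "i \<in> {m*Q..<m*Q+Q}"
  then have "i div Q = m" using Q by (intro div_nat_eqI) (auto simp: algebra_simps)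
  moreover have "i < Q*P"
  proof -
    have "(m+1)*Q \<le> P*Q" using m by (intro mult_le_mono1) simp
    then have "m*Q+Q \<le> P*Q" by simp
    then show ?thesis using i by (simp add: mult.commute)
  qed
  ultimately show "i \<in> {i. i < Q*P \<and> i div Q = m}" by simp
qed

lemma sum_single:
  assumes "finite A" "a \<in> A" "\<forall>x\<in>A. x \<noteq> a \<longrightarrow> f x = (0::nat)"
  shows "sum f A = f a"
proof -
  have "sum f A = f a + sum f (A - {a})" using assms(1,2) by (rule sum.remove)
  also have "sum f (A - {a}) = 0" using assms(3) by (intro sum.neutral) auto
  finally show ?thesis by simp
qed

lemma large_run:
  assumes n: "n \<ge> 2" and c: "c \<ge> 1" and run: "algA_large n c d R t"
  shows "feasible n c (\<lambda>_ _. d) R t \<and> cost n R t \<le> 2 * R \<and> R = nat \<lceil>fval c d\<rceil> * card (pairs n)"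
proof -
  obtain g where g: "\<forall>i<R. g i \<in> pairs n"
    and gc: "\<forall>p\<in>pairs n. card {i. i < R \<and> g i = p} = nat \<lceil>fval c d\<rceil>"
    and gz: "\<forall>i<R. \<forall>p\<in>pairs n. p \<noteq> g i \<longrightarrow> t i (fst p) (snd p) False = 0 \<and> t i (fst p) (snd p) True = 0"
    and feas: "feasible n c (\<lambda>_ _. d) R t"
    using run unfolding algA_large_def by blast
  have U: "{..<R} = (\<Union>p\<in>pairs n. {i. i < R \<and> g i = p})" using g by auto
  have "R = card (\<Union>p\<in>pairs n. {i. i < R \<and> g i = p})" unfolding U[symmetric] by simp
  also have "\<dots> = (\<Sum>p\<in>pairs n. card {i. i < R \<and> g i = p})"
    by (rule card_UN_disjoint) (auto simp: finite_pairs)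
  also have "\<dots> = (\<Sum>p\<in>pairs n. nat \<lceil>fval c d\<rceil>)" using gc by simp
  finally have R: "R = nat \<lceil>fval c d\<rceil> * card (pairs n)" by simp
  have adm: "adms n t i \<subseteq> {fst (g i), snd (g i)}" if i: "i < R" for i
  proof
    fix j assume "j \<in> adms n t i"
    then have j: "j \<in> {1..n}" "has_adm n t i j" by (auto simp: adms_def)
    then obtain k where k: "k \<in> {1..n}" "k \<noteq> j"
      "t i (min j k) (max j k) False + t i (min j k) (max j k) True > 0" by (auto simp: has_adm_def)
    have pp: "(min j k, max j k) \<in> pairs n" using j k by (auto simp: pairs_def)
    have "(min j k, max j k) = g i"
    proof (rule ccontr)
      assume "(min j k, max j k) \<noteq> g i"
      then have "t i (min j k) (max j k) False = 0 \<and> t i (min j k) (max j k) True = 0"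
        using gz[rule_format, OF i pp] by simp
      then show False using k(3) by simp
    qed
    then have e: "fst (g i) = min j k" "snd (g i) = max j k" by (metis fst_conv, metis snd_conv)
    show "j \<in> {fst (g i), snd (g i)}" unfolding e by (auto simp: min_def max_def)
  qed
  have "cost n R t = (\<Sum>i<R. card (adms n t i))" by (rule cost_adms)
  also have "\<dots> \<le> (\<Sum>i<R. 2)"
  proof (rule sum_mono)
    fix i assume "i \<in> {..<R}"
    then have "card (adms n t i) \<le> card {fst (g i), snd (g i)}" using adm by (intro card_mono) auto
    also have "\<dots> \<le> 2" by (cases "fst (g i) = snd (g i)") auto
    finally show "card (adms n t i) \<le> 2" .
  qed
  finally show ?thesis using feas R by simp
qed


lemma load_num:
  assumes "(M = 2 \<and> d < 2*c) \<or> d*(M*M) \<le> 4*c"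
  shows "d div 2 * 2 * (M*M - M) + d mod 2 * (M*M) \<le> 4*(c::nat)"
  using assms
proof
  assume a: "M = 2 \<and> d < 2*c"
  have e: "d = 2*(d div 2) + d mod 2" "d mod 2 \<le> 1" by simp_all
  have aux: "2*r + u < 2*c \<Longrightarrow> u \<le> 1 \<Longrightarrow> r + u \<le> (c::nat)" for r u by presburger
  have "d div 2 + d mod 2 \<le> c" using a e by (intro aux) auto
  then show ?thesis using a by simp
next
  assume a: "d*(M*M) \<le> 4*c"
  have "d div 2 * 2 * (M*M - M) \<le> d div 2 * 2 * (M*M)" by (intro mult_left_mono) auto
  then have "d div 2 * 2 * (M*M - M) + d mod 2 * (M*M) \<le> d div 2 * 2 * (M*M) + d mod 2 * (M*M)"
    by (rule add_right_mono)
  also have "\<dots> = (d div 2 * 2 + d mod 2) * (M*M)" by (simp only: distrib_right)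
  also have "d div 2 * 2 + d mod 2 = d" by simp
  finally show ?thesis using a by linarith
qed

lemma pairs_eq: "pairs n = {(j,k). j \<in> {1..n} \<and> k \<in> {1..n} \<and> j < k}"
  by (auto simp: pairs_def)

lemma card_pairs2: "2 * card (pairs n) + n = n * n"
  using card_pairs_in[of "{1..n}"] by (simp add: pairs_eq)

lemma split_sum:
  assumes so: "split_ok n d j k a b" shows "a + b = d"
proof -
  have dd: "(d+1) div 2 + d div 2 = d" "d div 2 + (d+1) div 2 = d" by presburger+
  consider "k-j < n-(k-j)" | "n-(k-j) < k-j" | "k-j = n-(k-j)" by arith
  then show ?thesis
  proof cases
    case 1
    then have "a = (d+1) div 2 \<and> b = d div 2" using so unfolding split_ok_def by simp
    then show ?thesis using dd by simp
  next
    case 2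
    then have "a = d div 2 \<and> b = (d+1) div 2" using so unfolding split_ok_def by simp
    then show ?thesis using dd by simp
  next
    case 3
    then have "(a = (d+1) div 2 \<and> b = d div 2) \<or> (a = d div 2 \<and> b = (d+1) div 2)" using so unfolding split_ok_def by simp
    then show ?thesis using dd by auto
  qed
qed

lemma small_run:
  assumes n: "n \<ge> 2" and c: "c \<ge> 1" and d: "d \<ge> 1" and dc: "d < 2*c"
    and run: "algA_small n c d R t"
  shows "feasible n c (\<lambda>_ _. d) R t \<and>
    (\<forall>X. n \<le> X \<longrightarrow> (\<forall>h. (h+1)*(d*card(pairs n)) \<le> X*(2*d*h*(h+1)+c)) \<longrightarrow> cost n R t \<le> 12*X)"
proof -
  define s where "s = nat \<lfloor>sqrt (2 / fval c d)\<rfloor>"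
  define M where "M = blocksize n c d"
  define \<mu> where "\<mu> = M div 2"
  have Mdef: "M = (if s < 2 then 2 else if s > n then n else s)" by (simp add: M_def blocksize_def s_def Let_def)
  have M2: "2 \<le> M" "M \<le> n" using n by (auto simp: Mdef)
  have mu: "\<mu> \<ge> 1" "2*\<mu> \<le> n" "2*\<mu> \<le> M" "M \<le> 2*\<mu>+1" using M2 unfolding \<mu>_def by auto
  obtain F blk bs where
    F: "\<forall>A\<in>F. A \<subseteq> {1..n} \<and> card A = \<mu>" and fF: "finite F" and cF: "card F = nat \<lceil>real n / real \<mu>\<rceil>"
    and UF: "\<Union>F = {1..n}"
    and blk: "\<forall>A\<in>F. \<forall>B\<in>F. A \<noteq> B \<longrightarrow> A \<union> B \<subseteq> blk {A,B} \<and> blk {A,B} \<subseteq> {1..n} \<and> card (blk {A,B}) = M"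
    and dbs: "distinct bs"
    and sbs: "set bs = (if card F = 1 then {{1..n}} else {blk {A, B} | A B. A \<in> F \<and> B \<in> F \<and> A \<noteq> B})"
    and R: "R = length bs"
    and tt: "\<forall>i<R. \<forall>(j,k)\<in>pairs n. (if j \<in> bs!i \<and> k \<in> bs!i \<and> \<not>(\<exists>i'<i. j \<in> bs!i' \<and> k \<in> bs!i')
        then split_ok n d j k (t i j k False) (t i j k True) else t i j k False = 0 \<and> t i j k True = 0)"
    using run unfolding algA_small_def Let_def M_def[symmetric] \<mu>_def[symmetric] by blast
  define q where "q = nat \<lceil>real n / real \<mu>\<rceil>"
  have qp: "n \<le> \<mu> * q" "\<mu> * q < n + \<mu>" "q \<ge> 2" using ceil_props[OF mu(1) mu(2)] unfolding q_def by auto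
  have cF2: "card F = q" using cF q_def by simp
  have sbs2: "set bs = {blk {A, B} | A B. A \<in> F \<and> B \<in> F \<and> A \<noteq> B}" using sbs cF2 qp(3) by simp
  have blkAB: "A \<union> B \<subseteq> blk {A,B} \<and> blk {A,B} \<subseteq> {1..n} \<and> card (blk {A,B}) = M"
    if AB: "A \<in> F" "B \<in> F" "A \<noteq> B" for A B
  proof -
    from blk AB(1) have "\<forall>B\<in>F. A \<noteq> B \<longrightarrow> A \<union> B \<subseteq> blk {A,B} \<and> blk {A,B} \<subseteq> {1..n} \<and> card (blk {A,B}) = M"
      by (rule bspec)
    then have "A \<noteq> B \<longrightarrow> A \<union> B \<subseteq> blk {A,B} \<and> blk {A,B} \<subseteq> {1..n} \<and> card (blk {A,B}) = M"
      using AB(2) by (rule bspec)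
    then show ?thesis using AB(3) by (rule mp)
  qed
  have blocks: "B \<subseteq> {1..n} \<and> card B = M" if Bb: "B \<in> set bs" for B
  proof -
    obtain A A' where "A \<in> F" "A' \<in> F" "A \<noteq> A'" "B = blk {A,A'}" using Bb unfolding sbs2 by blast
    then show ?thesis using blkAB by simp
  qed
  have blocks_i: "bs!i \<subseteq> {1..n} \<and> card (bs!i) = M" if "i < R" for i
    using blocks[of "bs!i"] that R by simp
  have cover: "\<exists>i<R. j \<in> bs!i \<and> k \<in> bs!i" if jk: "(j,k) \<in> pairs n" for j k
  proof -
    have "j \<in> \<Union>F" "k \<in> \<Union>F" using jk UF by (auto simp: pairs_def)
    then obtain A A' where A: "A \<in> F" "j \<in> A" "A' \<in> F" "k \<in> A'" by blast
    have "\<exists>Bl\<in>set bs. j \<in> Bl \<and> k \<in> Bl"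
    proof (cases "A = A'")
      case False
      then have "blk {A,A'} \<in> set bs" using A unfolding sbs2 by blast
      moreover have "A \<union> A' \<subseteq> blk {A,A'}" using blkAB[OF A(1,3) False] by simp
      then have "j \<in> blk {A,A'} \<and> k \<in> blk {A,A'}" using A(2,4) by blast
      ultimately show ?thesis by blast
    next
      case True
      have "card F \<ge> 2" using cF2 qp(3) by simp
      have "F - {A} \<noteq> {}"
      proof
        assume "F - {A} = {}"
        then have "F \<subseteq> {A}" by blast
        then have "card F \<le> 1" using card_mono[of "{A}" F] by simp
        then show False using \<open>card F \<ge> 2\<close> by simp
      qed
      then obtain C where C: "C \<in> F" "C \<noteq> A" by blast
      then have "blk {A,C} \<in> set bs" using A unfolding sbs2 by blast
      moreover have "A \<union> C \<subseteq> blk {A,C}" using blkAB[OF A(1) C(1) C(2)[symmetric]] by simp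
      then have "j \<in> blk {A,C} \<and> k \<in> blk {A,C}" using A(2,4) True by blast
      ultimately show ?thesis by blast
    qed
    then show ?thesis unfolding R by (metis in_set_conv_nth)
  qed
  have demand: "(\<Sum>i<R. t i j k False + t i j k True) = d" if jk: "(j,k) \<in> pairs n" for j k
  proof -
    let ?P = "\<lambda>i. j \<in> bs!i \<and> k \<in> bs!i"
    define i0 where "i0 = (LEAST i. ?P i)"
    obtain iw where iw: "iw < R" "?P iw" using cover[OF jk] by blast
    have Pi0: "?P i0" unfolding i0_def using iw(2) by (rule LeastI)
    have i0le: "i0 \<le> iw" unfolding i0_def using iw(2) by (rule Least_le)
    have nb: "\<not> ?P i'" if "i' < i0" for i' using that not_less_Least unfolding i0_def by blast
    have i0R: "i0 < R" using i0le iw by simp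
    have "(\<Sum>i<R. t i j k False + t i j k True) = (\<Sum>i<R. if i = i0 then d else 0)"
    proof (rule sum.cong[OF refl])
      fix i assume i: "i \<in> {..<R}"
      have ti: "if ?P i \<and> \<not>(\<exists>i'<i. ?P i') then split_ok n d j k (t i j k False) (t i j k True)
          else t i j k False = 0 \<and> t i j k True = 0" using tt[rule_format, OF _ jk, of i] i by simp
      show "t i j k False + t i j k True = (if i = i0 then d else 0)"
      proof (cases "i = i0")
        case True
        then have "?P i \<and> \<not>(\<exists>i'<i. ?P i')" using Pi0 nb by auto
        then have "split_ok n d j k (t i j k False) (t i j k True)" using ti by simp
        then show ?thesis using True split_sum by simp
      next
        case False
        have "\<not> (?P i \<and> \<not>(\<exists>i'<i. ?P i'))"
        proof
          assume a: "?P i \<and> \<not>(\<exists>i'<i. ?P i')"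
          then have "i0 \<le> i" unfolding i0_def by (simp add: Least_le)
          then have "i0 < i" using False by simp
          then show False using a Pi0 by blast
        qed
        then show ?thesis using ti False by simp
      qed
    qed
    also have "\<dots> = d" using i0R by simp
    finally show ?thesis .
  qed
  have lcond: "(M = 2 \<and> d < 2*c) \<or> d*(M*M) \<le> 4*c"
  proof (cases "s < 2")
    case True then show ?thesis using dc by (simp add: Mdef)
  next
    case False
    then have "M \<le> s" by (auto simp: Mdef)
    then have "d*(M*M) \<le> d*(s*s)" by (intro mult_left_mono mult_mono) auto
    also have "\<dots> \<le> 4*c" using s_props(1)[OF c d] unfolding s_def .
    finally show ?thesis by simp
  qed
  have load: "load n t i e \<le> c" if i: "i < R" and e: "e \<in> {1..n}" for i e
  proof -
    have B: "bs!i \<subseteq> {1..n}" "card (bs!i) = M" using blocks_i[OF i] by auto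
    have tdef: "\<forall>(j,k)\<in>pairs n. if j \<in> bs!i \<and> k \<in> bs!i \<and> (\<lambda>j k. \<not>(\<exists>i'<i. j \<in> bs!i' \<and> k \<in> bs!i')) j k
        then split_ok n d j k (t i j k False) (t i j k True) else t i j k False = 0 \<and> t i j k True = 0"
      using tt i by simp
    have "4 * load n t i e \<le> d div 2 * 2 * (M*M - M) + d mod 2 * (M*M)"
      using ring_load[where B="bs!i" and n=n and d=d and t=t and i=i and e=e and Q="\<lambda>j k. \<not>(\<exists>i'<i. j \<in> bs!i' \<and> k \<in> bs!i')", OF B(1) tdef e] B(2) by simp
    also have "\<dots> \<le> 4*c" by (rule load_num[OF lcond])
    finally show ?thesis by simp
  qed
  have feas: "feasible n c (\<lambda>_ _. d) R t"
    unfolding feasible_def using demand load by auto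
  have adm_sub: "adms n t i \<subseteq> bs!i" if i: "i < R" for i
  proof
    fix j assume "j \<in> adms n t i"
    then have j: "j \<in> {1..n}" "has_adm n t i j" by (auto simp: adms_def)
    then obtain k where k: "k \<in> {1..n}" "k \<noteq> j"
      "t i (min j k) (max j k) False + t i (min j k) (max j k) True > 0" by (auto simp: has_adm_def)
    have pp: "(min j k, max j k) \<in> pairs n" using j k by (auto simp: pairs_def)
    have "min j k \<in> bs!i \<and> max j k \<in> bs!i"
    proof (rule ccontr)
      assume nc: "\<not> (min j k \<in> bs!i \<and> max j k \<in> bs!i)"
      have ti: "if min j k \<in> bs!i \<and> max j k \<in> bs!i \<and> \<not>(\<exists>i'<i. min j k \<in> bs!i' \<and> max j k \<in> bs!i')
        then split_ok n d (min j k) (max j k) (t i (min j k) (max j k) False) (t i (min j k) (max j k) True)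
        else t i (min j k) (max j k) False = 0 \<and> t i (min j k) (max j k) True = 0"
        using tt[rule_format, OF i pp] by simp
      have "\<not> (min j k \<in> bs!i \<and> max j k \<in> bs!i \<and> \<not>(\<exists>i'<i. min j k \<in> bs!i' \<and> max j k \<in> bs!i'))"
        using nc by blast
      from ti[unfolded if_not_P[OF this]]
      have "t i (min j k) (max j k) False = 0 \<and> t i (min j k) (max j k) True = 0" .
      then show False using k(3) by simp
    qed
    then show "j \<in> bs!i" by (cases "j \<le> k") (auto simp: min_def max_def)
  qed
  have costRM: "cost n R t \<le> R * M"
  proof -
    have "cost n R t = (\<Sum>i<R. card (adms n t i))" by (rule cost_adms)
    also have "\<dots> \<le> (\<Sum>i<R. M)"
    proof (rule sum_mono)
      fix i assume "i \<in> {..<R}"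
      then have i: "i < R" by simp
      have "finite (bs!i)" by (rule finite_subset[of _ "{1..n}"]) (use blocks_i[OF i] in auto)
      then have "card (adms n t i) \<le> card (bs!i)" using adm_sub[OF i] by (rule card_mono)
      then show "card (adms n t i) \<le> M" using blocks_i[OF i] by simp
    qed
    finally show ?thesis by simp
  qed
  have Rcard: "R = card (set bs)" using dbs R by (simp add: distinct_card)
  have cost_bound: "cost n R t \<le> 12*X"
    if Xn: "n \<le> X" and XL: "\<forall>h. (h+1)*(d*card(pairs n)) \<le> X*(2*d*h*(h+1)+c)" for X
  proof (cases "M = n")
    case True
    have "set bs \<subseteq> {{1..n}}"
    proof
      fix B assume "B \<in> set bs"
      then have "B \<subseteq> {1..n}" "card B = n" using blocks True by auto
      then have "B = {1..n}" by (intro card_subset_eq) auto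
      then show "B \<in> {{1..n}}" by simp
    qed
    then have "R \<le> 1" unfolding Rcard using card_mono[of "{{1..n}}" "set bs"] by simp
    then have "R * M \<le> 1 * n" using True by (intro mult_mono) auto
    then have "cost n R t \<le> n" using costRM by linarith
    then show ?thesis using Xn by linarith
  next
    case False
    then have Mn: "M < n" using M2 by simp
    have Mb: "4*c < d*((M+1)*(M+1))"
    proof (cases "s < 2")
      case True
      then have "(s+1)*(s+1) \<le> (M+1)*(M+1)" using M2 by (intro mult_mono) auto
      then have "d*((s+1)*(s+1)) \<le> d*((M+1)*(M+1))" by simp
      then show ?thesis using s_props(2)[OF c d] unfolding s_def by linarith
    next
      case False
      then have "M = s" using Mn by (auto simp: Mdef split: if_splits)
      then show ?thesis using s_props(2)[OF c d] unfolding s_def by simp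
    qed
    have "(M+1)*(M+1) \<le> (2*\<mu>+2)*(2*\<mu>+2)" using mu by (intro mult_mono) auto
    then have "4*c < d*((2*\<mu>+2)*(2*\<mu>+2))" using Mb
      using mult_le_mono2[of "(M+1)*(M+1)" "(2*\<mu>+2)*(2*\<mu>+2)" d] by linarith
    then have cb: "c \<le> d*((\<mu>+1)*(\<mu>+1))" by (simp add: algebra_simps)
    have XL': "(\<mu>-1+1)*(d*card(pairs n)) \<le> X*(2*d*(\<mu>-1)*(\<mu>-1+1)+c)" using XL by blast
    have m1: "\<mu>-1+1 = \<mu>" using mu by simp
    have "d*(\<mu>*card(pairs n)) = \<mu>*(d*card(pairs n))" by simp
    also have "\<dots> \<le> X*(2*d*(\<mu>-1)*\<mu>+c)" using XL' unfolding m1 .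
    also have "\<dots> \<le> X*(2*d*(\<mu>-1)*\<mu>+d*((\<mu>+1)*(\<mu>+1)))" using cb by (intro mult_left_mono) auto
    also have "2*d*(\<mu>-1)*\<mu>+d*((\<mu>+1)*(\<mu>+1)) = d*(3*\<mu>*\<mu>+1)"
    proof -
      obtain m where m: "\<mu> = m+1" using mu by (cases \<mu>) auto
      show ?thesis unfolding m by (simp add: algebra_simps)
    qed
    also have "X*(d*(3*\<mu>*\<mu>+1)) = d*(X*(3*\<mu>*\<mu>+1))" by (simp only: mult.left_commute)
    finally have "\<mu>*card(pairs n) \<le> X*(3*\<mu>*\<mu>+1)" using d by simp
    note XP = this
    have Rq: "R \<le> q choose 2"
    proof -
      have "set bs \<subseteq> blk ` {P. P \<subseteq> F \<and> card P = 2}"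
      proof
        fix B assume "B \<in> set bs"
        then obtain A A' where "A \<in> F" "A' \<in> F" "A \<noteq> A'" "B = blk {A,A'}" unfolding sbs2 by blast
        then show "B \<in> blk ` {P. P \<subseteq> F \<and> card P = 2}" by (intro image_eqI[of _ _ "{A,A'}"]) auto
      qed
      have fin: "finite {P. P \<subseteq> F \<and> card P = 2}" by (rule finite_subset[of _ "Pow F"]) (auto simp: fF)
      then have "card (set bs) \<le> card (blk ` {P. P \<subseteq> F \<and> card P = 2})"
        using \<open>set bs \<subseteq> _\<close> by (intro card_mono) auto
      also have "\<dots> \<le> card {P. P \<subseteq> F \<and> card P = 2}" using fin by (rule card_image_le)
      also have "\<dots> = q choose 2" using n_subsets[OF fF, of 2] cF2 by simp
      finally show ?thesis using Rcard by simp
    qed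
    have "R * M \<le> (q choose 2) * (2*\<mu>+1)" using Rq mu(4) by (rule mult_mono) auto
    then have "2 * cost n R t \<le> 2 * ((q choose 2) * (2*\<mu>+1))" using costRM by linarith
    also have "\<dots> = q*(q-1)*(2*\<mu>+1)" by (simp add: choose_two algebra_simps)
    also have "\<dots> \<le> 24*X"
      by (rule arith_small[OF mu(1) _ qp(2) card_pairs2 XP]) (use Mn mu in auto)
    finally show ?thesis by simp
  qed
  show ?thesis using feas cost_bound by blast
qed


lemma Q_props:
  assumes c: "c \<ge> 1" and dc: "d \<ge> 2*c"
  defines "Q \<equiv> nat \<lceil>fval c d\<rceil>"
  shows "Q \<ge> 1" "d \<le> 2*c*Q" "2*c*(Q-1) < d"
proof -
  let ?f = "fval c d"
  have f1: "?f \<ge> 1" using fval_ge1[OF c] dc by simp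
  have rq: "real Q = of_int \<lceil>?f\<rceil>" unfolding Q_def using f1 by simp
  have c1: "?f \<le> real Q" unfolding rq by simp
  have c2: "real Q - 1 < ?f" unfolding rq using ceiling_correct[of ?f] by linarith
  have cp: "2 * real c > 0" using c by simp
  have fdef: "?f = real d / (2 * real c)" by (simp add: fval_def)
  have "real Q \<ge> 1" using c1 f1 by linarith
  then show Q1: "Q \<ge> 1" by simp
  have "real d \<le> real Q * (2 * real c)" using c1 unfolding fdef by (simp only: pos_divide_le_eq[OF cp])
  moreover have "real (2*c*Q) = real Q * (2 * real c)" by simp
  ultimately have "real d \<le> real (2*c*Q)" by linarith
  then show "d \<le> 2*c*Q" by (simp only: of_nat_le_iff)
  have "(real Q - 1) * (2 * real c) < real d" using c2 unfolding fdef by (simp only: pos_less_divide_eq[OF cp])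
  moreover have "real (2*c*(Q-1)) = (real Q - 1) * (2 * real c)"
  proof -
    obtain Q' where "Q = Suc Q'" using Q1 by (cases Q) auto
    then show ?thesis by (simp add: algebra_simps)
  qed
  ultimately have "real (2*c*(Q-1)) < real d" by linarith
  then show "2*c*(Q-1) < d" by (simp only: of_nat_less_iff)
qed

lemma large_exists:
  assumes n: "n \<ge> 2" and c: "c \<ge> 1" and dc: "d \<ge> 2*c"
  shows "\<exists>R t. algA_large n c d R t"
proof -
  define Q where "Q = nat \<lceil>fval c d\<rceil>"
  have Q: "Q \<ge> 1" "d \<le> 2*c*Q" "2*c*(Q-1) < d" using Q_props[OF c dc] unfolding Q_def by auto
  obtain ps where ps: "set ps = pairs n" "distinct ps" using finite_distinct_list[OF finite_pairs] by blast
  define P where "P = length ps"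
  have P: "P = card (pairs n)" unfolding P_def using distinct_card[OF ps(2)] ps(1) by simp
  define R where "R = Q * P"
  define g :: "nat \<Rightarrow> nat \<times> nat" where "g i = ps ! (i div Q)" for i
  define amt :: "nat \<Rightarrow> nat" where "amt r = (if r = 0 then d - 2*c*(Q-1) else 2*c)" for r
  define t where "t i j k b = (if (j,k) = g i then (if b then amt (i mod Q) - amt (i mod Q) div 2 else amt (i mod Q) div 2) else 0)" for i j k b
  have divP: "i div Q < P" if "i < R" for i
    using that unfolding R_def by (intro less_mult_imp_div_less) (simp add: mult.commute)
  have g_in: "g i \<in> pairs n" if "i < R" for i
    unfolding g_def using nth_mem[of "i div Q" ps] divP[OF that] ps(1) P_def by simp
  have g_eq: "(g i = ps ! m) = (i div Q = m)" if "i < R" "m < P" for i m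
    unfolding g_def using divP[OF that(1)] that(2) ps(2) P_def by (simp add: nth_eq_iff_index_eq)
  have fiber: "{i. i < R \<and> g i = ps ! m} = {m*Q..<m*Q+Q}" if m: "m < P" for m
  proof -
    have "{i. i < R \<and> g i = ps ! m} = {i. i < Q*P \<and> i div Q = m}"
      using g_eq m unfolding R_def by auto
    also have "\<dots> = {m*Q..<m*Q+Q}" by (rule div_block[OF Q(1) m])
    finally show ?thesis .
  qed
  have QQ: "2*c*Q = 2*c*(Q-1) + 2*c" using Q(1) by (cases Q) (auto simp: algebra_simps)
  have amt_le: "amt r \<le> 2*c" for r using Q QQ unfolding amt_def by auto
  have amt_sum: "(\<Sum>r<Q. amt r) = d"
  proof -
    obtain Q' where Q': "Q = Suc Q'" using Q(1) by (cases Q) auto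
    have "(\<Sum>r<Q. amt r) = amt 0 + (\<Sum>r<Q'. amt (Suc r))" unfolding Q' by (rule sum.lessThan_Suc_shift)
    also have "\<dots> = (d - 2*c*Q') + Q' * (2*c)" by (simp add: amt_def Q')
    also have "\<dots> = d" using Q(3) unfolding Q' by (simp add: algebra_simps)
    finally show ?thesis .
  qed
  have demand: "(\<Sum>i<R. t i j k False + t i j k True) = d" if jk: "(j,k) \<in> pairs n" for j k
  proof -
    have "(j,k) \<in> set ps" using jk ps(1) by simp
    then obtain m where m: "m < P" "(j,k) = ps ! m" unfolding P_def in_set_conv_nth by auto
    have "(\<Sum>i<R. t i j k False + t i j k True) = (\<Sum>i<R. if i div Q = m then amt (i mod Q) else 0)"
    proof (rule sum.cong[OF refl])
      fix i assume "i \<in> {..<R}"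
      then have i: "i < R" by simp
      have "((j,k) = g i) = (i div Q = m)" using g_eq[OF i m(1)] m(2) by auto
      then show "t i j k False + t i j k True = (if i div Q = m then amt (i mod Q) else 0)"
        unfolding t_def by simp
    qed
    also have "\<dots> = (\<Sum>i\<in>{i\<in>{..<R}. i div Q = m}. amt (i mod Q))"
      by (rule sum.inter_filter[symmetric]) simp
    also have "{i\<in>{..<R}. i div Q = m} = {m*Q..<m*Q+Q}"
      using div_block[OF Q(1) m(1)] unfolding R_def by auto
    also have "(\<Sum>i\<in>{m*Q..<m*Q+Q}. amt (i mod Q)) = (\<Sum>r\<in>{0..<Q}. amt ((r + m*Q) mod Q))"
      using sum.shift_bounds_nat_ivl[of "\<lambda>i. amt (i mod Q)" 0 "m*Q" Q] by (simp add: add.commute)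
    also have "\<dots> = (\<Sum>r<Q. amt r)" by (intro sum.cong) auto
    finally show ?thesis using amt_sum by simp
  qed
  have load: "load n t i e \<le> c" if i: "i < R" for i e
  proof -
    let ?term = "\<lambda>(j,k). (if e \<in> arc_edges n j k False then t i j k False else 0) + (if e \<in> arc_edges n j k True then t i j k True else 0)"
    have "load n t i e = (\<Sum>p\<in>pairs n. ?term p)" unfolding load_def by simp
    also have "\<dots> = ?term (g i)"
    proof (rule sum_single[OF finite_pairs g_in[OF i]])
      show "\<forall>x\<in>pairs n. x \<noteq> g i \<longrightarrow> ?term x = 0" unfolding t_def by auto
    qed
    also have "\<dots> \<le> c"
    proof -
      obtain j k where jk: "g i = (j,k)" by (cases "g i")
      let ?x = "amt (i mod Q)"
      have "?x div 2 \<le> c" "?x - ?x div 2 \<le> c" using amt_le[of "i mod Q"] by auto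
      moreover have "\<not> (e \<in> arc_edges n j k False \<and> e \<in> arc_edges n j k True)" by (auto simp: arc_edges_def)
      ultimately show ?thesis unfolding jk t_def by auto
    qed
    finally show ?thesis .
  qed
  have feas: "feasible n c (\<lambda>_ _. d) R t" unfolding feasible_def using demand load by auto
  have card_fiber: "\<forall>p\<in>pairs n. card {i. i < R \<and> g i = p} = Q"
  proof
    fix p assume "p \<in> pairs n"
    then have "p \<in> set ps" using ps(1) by simp
    then obtain m where m: "m < P" "p = ps ! m" unfolding P_def in_set_conv_nth by auto
    show "card {i. i < R \<and> g i = p} = Q" unfolding m(2) fiber[OF m(1)] by simp
  qed
  have zero: "\<forall>i<R. \<forall>p\<in>pairs n. p \<noteq> g i \<longrightarrow> t i (fst p) (snd p) False = 0 \<and> t i (fst p) (snd p) True = 0"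
    unfolding t_def by auto
  have "algA_large n c d R t" unfolding algA_large_def Q_def[symmetric]
  proof (intro exI[of _ g] conjI)
    show "\<forall>i<R. g i \<in> pairs n" using g_in by simp
  qed (rule card_fiber, rule zero, rule feas)
  then show ?thesis by blast
qed


lemma split_ok_def_t:
  assumes "j < k" "k \<le> n"
  shows "split_ok n d j k (if 2*(k-j) \<le> n then (d+1) div 2 else d div 2) (if 2*(k-j) \<le> n then d div 2 else (d+1) div 2)"
proof -
  have L: "(k-j < n-(k-j)) = (2*(k-j) < n)" "(k-j > n-(k-j)) = (2*(k-j) > n)" "(k-j = n-(k-j)) = (2*(k-j) = n)"
    using assms by arith+
  show ?thesis unfolding split_ok_def L by auto
qed

lemma small_exists:
  assumes n: "n \<ge> 2" and c: "c \<ge> 1" and d: "d \<ge> 1" and dc: "d < 2*c"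
  shows "\<exists>R t. algA_small n c d R t"
proof -
  define M where "M = blocksize n c d"
  define \<mu> where "\<mu> = M div 2"
  have M2: "2 \<le> M" "M \<le> n" using n by (auto simp: M_def blocksize_def Let_def)
  have mu: "\<mu> \<ge> 1" "2*\<mu> \<le> n" "2*\<mu> \<le> M" using M2 unfolding \<mu>_def by auto
  define q where "q = nat \<lceil>real n / real \<mu>\<rceil>"
  have qp: "n \<le> \<mu> * q" "\<mu> * q < n + \<mu>" "q \<ge> 2" using ceil_props[OF mu(1) mu(2)] unfolding q_def by auto
  have qm1: "(q-1)*\<mu> < n"
  proof -
    obtain q' where "q = Suc q'" using qp(3) by (cases q) auto
    then show ?thesis using qp(2) by (simp add: algebra_simps)
  qed
  define a :: "nat \<Rightarrow> nat" where "a i = min (i*\<mu>) (n-\<mu>)" for i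
  define A :: "nat \<Rightarrow> nat set" where "A i = {a i + 1 .. a i + \<mu>}" for i
  define F where "F = A ` {..<q}"
  have a_small: "a i = i*\<mu>" if "i + 1 < q" for i
  proof -
    have "(i+1)*\<mu> \<le> (q-1)*\<mu>" using that by (intro mult_le_mono1) simp
    also have "(q-1)*\<mu> < n" by (rule qm1)
    finally have "i*\<mu> + \<mu> < n" by simp
    then show ?thesis unfolding a_def by simp
  qed
  have a_last: "a (q-1) = n - \<mu>"
  proof -
    have "n \<le> (q-1)*\<mu> + \<mu>" using qp(1) qp(3) by (cases q) (auto simp: algebra_simps)
    then show ?thesis unfolding a_def by simp
  qed
  have a_mono: "a i < a i'" if "i < i'" "i' < q" for i i'
  proof -
    have ai: "a i = i*\<mu>" using that by (intro a_small) simp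
    have "i*\<mu> < i'*\<mu>" using that mu(1) by simp
    moreover have "i*\<mu> + \<mu> < n"
    proof -
      have "(i+1)*\<mu> \<le> (q-1)*\<mu>" using that by (intro mult_le_mono1) simp
      also have "(q-1)*\<mu> < n" by (rule qm1)
      finally show ?thesis by simp
    qed
    ultimately show ?thesis unfolding ai unfolding a_def by simp
  qed
  have a_le: "a i + \<mu> \<le> n" for i using mu unfolding a_def by auto
  have A_sub: "A i \<subseteq> {1..n}" for i using a_le[of i] unfolding A_def by auto
  have A_card: "card (A i) = \<mu>" for i unfolding A_def by simp
  have A_inj: "inj_on A {..<q}"
  proof (rule inj_onI)
    fix i i' assume ii: "i \<in> {..<q}" "i' \<in> {..<q}" "A i = A i'"
    have "a i + 1 \<in> A i" "a i' + 1 \<in> A i'" using mu(1) unfolding A_def by auto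
    then have "a i' + 1 \<le> a i + 1" "a i + 1 \<le> a i' + 1" using ii(3) unfolding A_def by auto
    then have "a i = a i'" by simp
    then show "i = i'" using a_mono ii(1,2) by (metis lessThan_iff less_irrefl nat_neq_iff)
  qed
  have cF: "card F = q" unfolding F_def using card_image[OF A_inj] by simp
  have fF: "finite F" unfolding F_def by simp
  have F_props: "\<forall>B\<in>F. B \<subseteq> {1..n} \<and> card B = \<mu>" unfolding F_def using A_sub A_card by auto
  have UF: "\<Union>F = {1..n}"
  proof
    show "\<Union>F \<subseteq> {1..n}" using F_props by auto
    show "{1..n} \<subseteq> \<Union>F"
    proof
      fix x assume x: "x \<in> {1..n}"
      show "x \<in> \<Union>F"
      proof (cases "x + \<mu> \<le> n")
        case True
        define i where "i = (x-1) div \<mu>"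
        have i1: "i*\<mu> \<le> x-1" unfolding i_def by (simp add: div_times_less_eq_dividend)
        have i2: "x-1 < i*\<mu> + \<mu>"
        proof -
          have "x - 1 = i*\<mu> + (x-1) mod \<mu>" unfolding i_def by simp
          moreover have "(x-1) mod \<mu> < \<mu>" using mu(1) by simp
          ultimately show ?thesis by linarith
        qed
        have iq: "i < q"
        proof (rule ccontr)
          assume "\<not> i < q"
          then have "\<mu>*q \<le> \<mu>*i" by (intro mult_le_mono2) simp
          moreover have "i*\<mu> = \<mu>*i" by simp
          moreover have "x - 1 < n" using x by auto
          ultimately show False using qp(1) i1 by linarith
        qed
        have "a i = i*\<mu>" unfolding a_def using i1 True x by auto
        then have "x \<in> A i" unfolding A_def using i1 i2 x by auto
        then show ?thesis unfolding F_def using iq by blast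
      next
        case False
        have "x \<in> A (q-1)" unfolding A_def a_last using False x by auto
        moreover have "q - 1 < q" using qp(3) by simp
        ultimately show ?thesis unfolding F_def by blast
      qed
    qed
  qed
  define blk :: "nat set set \<Rightarrow> nat set" where "blk P = (SOME Y. \<Union>P \<subseteq> Y \<and> Y \<subseteq> {1..n} \<and> card Y = M)" for P
  have blk_ok: "A \<union> B \<subseteq> blk {A,B} \<and> blk {A,B} \<subseteq> {1..n} \<and> card (blk {A,B}) = M"
    if AB: "A \<in> F" "B \<in> F" for A B
  proof -
    have "card (A \<union> B) \<le> card A + card B" by (rule card_Un_le)
    also have "\<dots> = 2*\<mu>" using F_props AB by simp
    finally have "card (\<Union>{A,B}) \<le> M" using mu(3) by simp
    moreover have "M \<le> card {1..n}" using M2 by simp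
    moreover have "\<Union>{A,B} \<subseteq> {1..n}" using F_props AB by auto
    ultimately have "\<exists>Y. \<Union>{A,B} \<subseteq> Y \<and> Y \<subseteq> {1..n} \<and> card Y = M"
      by (intro exists_subset_between) auto
    then have "\<Union>{A,B} \<subseteq> blk {A,B} \<and> blk {A,B} \<subseteq> {1..n} \<and> card (blk {A,B}) = M"
      unfolding blk_def by (rule someI_ex)
    then show ?thesis by simp
  qed
  define BS where "BS = {blk {A, B} | A B. A \<in> F \<and> B \<in> F \<and> A \<noteq> B}"
  have fBS: "finite BS"
  proof -
    have "BS \<subseteq> (\<lambda>(A,B). blk {A,B}) ` (F \<times> F)" unfolding BS_def by auto
    moreover have "finite ((\<lambda>(A,B). blk {A,B}) ` (F \<times> F))" using fF by simp
    ultimately show ?thesis by (rule finite_subset)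
  qed
  obtain bs where bs: "set bs = BS" "distinct bs" using finite_distinct_list[OF fBS] by blast
  define R where "R = length bs"
  define t where "t i j k b = (if j \<in> bs!i \<and> k \<in> bs!i \<and> \<not>(\<exists>i'<i. j \<in> bs!i' \<and> k \<in> bs!i')
      then (if b then (if 2*(k-j) \<le> n then d div 2 else (d+1) div 2) else (if 2*(k-j) \<le> n then (d+1) div 2 else d div 2))
      else 0)" for i j k b
  have tt: "\<forall>i<R. \<forall>(j,k)\<in>pairs n. (if j \<in> bs!i \<and> k \<in> bs!i \<and> \<not>(\<exists>i'<i. j \<in> bs!i' \<and> k \<in> bs!i')
        then split_ok n d j k (t i j k False) (t i j k True) else t i j k False = 0 \<and> t i j k True = 0)"
  proof (intro allI impI ballI)
    fix i p assume "i < R" "p \<in> pairs n"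
    obtain j k where p: "p = (j,k)" by (cases p)
    then have jk: "j < k" "k \<le> n" using \<open>p \<in> pairs n\<close> by (auto simp: pairs_def)
    have G: "if j \<in> bs!i \<and> k \<in> bs!i \<and> \<not>(\<exists>i'<i. j \<in> bs!i' \<and> k \<in> bs!i')
        then split_ok n d j k (t i j k False) (t i j k True) else t i j k False = 0 \<and> t i j k True = 0"
    proof (cases "j \<in> bs!i \<and> k \<in> bs!i \<and> \<not>(\<exists>i'<i. j \<in> bs!i' \<and> k \<in> bs!i')")
      case True
      have "t i j k False = (if 2*(k-j) \<le> n then (d+1) div 2 else d div 2)"
        "t i j k True = (if 2*(k-j) \<le> n then d div 2 else (d+1) div 2)"
        unfolding t_def if_P[OF True] by simp_all
      then show ?thesis unfolding if_P[OF True] using split_ok_def_t[OF jk, of d] by simp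
    next
      case False
      have "t i j k False = 0" "t i j k True = 0" unfolding t_def if_not_P[OF False] by simp_all
      then show ?thesis unfolding if_not_P[OF False] by simp
    qed
    show "case p of (j,k) \<Rightarrow> (if j \<in> bs!i \<and> k \<in> bs!i \<and> \<not>(\<exists>i'<i. j \<in> bs!i' \<and> k \<in> bs!i')
        then split_ok n d j k (t i j k False) (t i j k True) else t i j k False = 0 \<and> t i j k True = 0)"
      unfolding p prod.case by (rule G)
  qed
  have cF1: "card F \<noteq> 1" using cF qp(3) by simp
  have "algA_small n c d R t"
    unfolding algA_small_def Let_def M_def[symmetric] \<mu>_def[symmetric]
  proof (intro exI[of _ F] exI[of _ blk] exI[of _ bs] conjI)
    show "\<forall>A\<in>F. A \<subseteq> {1..n} \<and> card A = \<mu>" by (rule F_props)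
    show "finite F" by (rule fF)
    show "card F = nat \<lceil>real n / real \<mu>\<rceil>" using cF q_def by simp
    show "\<Union>F = {1..n}" by (rule UF)
    show "\<forall>A\<in>F. \<forall>B\<in>F. A \<noteq> B \<longrightarrow> A \<union> B \<subseteq> blk {A, B} \<and> blk {A, B} \<subseteq> {1..n} \<and> card (blk {A, B}) = M"
      using blk_ok by blast
    show "distinct bs" by (rule bs(2))
    show "set bs = (if card F = 1 then {{1..n}} else {blk {A, B} | A B. A \<in> F \<and> B \<in> F \<and> A \<noteq> B})"
      using cF1 bs(1) BS_def by simp
    show "R = length bs" by (rule R_def)
  qed (rule tt)
  then show ?thesis by blast
qed


theorem theorem2:
  fixes n c d :: nat
  assumes "n \<ge> 2" and "c \<ge> 1" and "d \<ge> 1"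
  shows "(\<exists>R t. algA n c d R t) \<and>
         (\<forall>R t. algA n c d R t \<longrightarrow>
            feasible n c (\<lambda>_ _. d) R t \<and>
            real (cost n R t) \<le> 12 * sqrt 2 * real (min_cost n c (\<lambda>_ _. d)))"
proof -
  note n = assms(1) and c = assms(2) and d = assms(3)
  have ex: "\<exists>R t. algA n c d R t"
  proof (cases "fval c d \<ge> 1")
    case True
    then have "d \<ge> 2*c" using fval_ge1[OF c] by simp
    then obtain R t where "algA_large n c d R t" using large_exists[OF n c] by blast
    then show ?thesis using True unfolding algA_def by auto
  next
    case False
    then have "d < 2*c" using fval_ge1[OF c] by simp
    then obtain R t where "algA_small n c d R t" using small_exists[OF n c d] by blast
    then show ?thesis using False unfolding algA_def by auto
  qed
  have feas_all: "feasible n c (\<lambda>_ _. d) R t" if "algA n c d R t" for R t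
  proof (cases "fval c d \<ge> 1")
    case True
    then have "algA_large n c d R t" using that unfolding algA_def by simp
    then show ?thesis using large_run[OF n c] by blast
  next
    case False
    then have dc: "d < 2*c" using fval_ge1[OF c] by simp
    have "algA_small n c d R t" using that False unfolding algA_def by simp
    then show ?thesis using small_run[OF n c d dc] by blast
  qed
  obtain R0 t0 where "algA n c d R0 t0" using ex by blast
  then have "feasible n c (\<lambda>_ _. d) R0 t0" by (rule feas_all)
  then have exf: "\<exists>x. \<exists>R t. feasible n c (\<lambda>_ _. d) R t \<and> cost n R t = x" by blast
  define X where "X = min_cost n c (\<lambda>_ _. d)"
  have "\<exists>R t. feasible n c (\<lambda>_ _. d) R t \<and> cost n R t = X"
    unfolding X_def min_cost_def using exf by (rule LeastI_ex)
  then obtain R1 t1 where R1: "feasible n c (\<lambda>_ _. d) R1 t1" "cost n R1 t1 = X" by blast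
  have Xn: "n \<le> X" using cost_ge_n[OF R1(1) n d] R1(2) by simp
  have XL: "\<forall>h. (h+1)*(d*card(pairs n)) \<le> X*(2*d*h*(h+1)+c)" using lower_bound[OF R1(1)] R1(2) by simp
  have bound: "cost n R t \<le> 12 * X" if run: "algA n c d R t" for R t
  proof (cases "fval c d \<ge> 1")
    case True
    then have dc: "d \<ge> 2*c" using fval_ge1[OF c] by simp
    have lr: "algA_large n c d R t" using run True unfolding algA_def by simp
    define Q where "Q = nat \<lceil>fval c d\<rceil>"
    have Q: "2*c*(Q-1) < d" "Q \<ge> 1" using Q_props[OF c dc] unfolding Q_def by auto
    have cR: "cost n R t \<le> 2 * R" "R = Q * card (pairs n)" using large_run[OF n c lr] unfolding Q_def by auto
    have "2*c*Q = 2*c*(Q-1) + 2*c" using Q(2) by (cases Q) (auto simp: algebra_simps)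
    then have "c*Q \<le> d" using Q(1) dc by linarith
    then have "(c*Q)*card (pairs n) \<le> d*card (pairs n)" by (rule mult_right_mono) simp
    also have "\<dots> \<le> X*c" using XL[rule_format, of 0] by simp
    finally have "c*(Q*card (pairs n)) \<le> c*X" by (simp add: algebra_simps)
    then have "Q*card (pairs n) \<le> X" using c by simp
    then show ?thesis using cR by linarith
  next
    case False
    then have dc: "d < 2*c" using fval_ge1[OF c] by simp
    have "algA_small n c d R t" using run False unfolding algA_def by simp
    then show ?thesis using small_run[OF n c d dc] Xn XL by blast
  qed
  have s2: "(1::real) \<le> sqrt 2" by simp
  have main: "real (cost n R t) \<le> 12 * sqrt 2 * real X" if run: "algA n c d R t" for R t
  proof -
    have "real (cost n R t) \<le> 12 * real X" using bound[OF run] by (simp only: of_nat_le_iff[symmetric] of_nat_mult of_nat_numeral)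
    also have "\<dots> \<le> 12 * sqrt 2 * real X" using s2 by (intro mult_right_mono) auto
    finally show ?thesis .
  qed
  show ?thesis using ex feas_all main unfolding X_def by blast
qed


end
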